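(* Let $\theta<1/2$ and let $\mu_j\in\mathbb C$ with $\Re(\mu_j)\ge-\theta$. Then for every $\varepsilon\in[-1/2,1/2]$ and every real $t$, $$\left|\frac{\Gamma\left(\frac{\mu_j+1+\varepsilon+it}{2}\right)}{\Gamma\left(\frac{\mu_j-\varepsilon+it}{2}\right)}\right|\le\left|\frac{\mu_j+2-\varepsilon+it}{2}\right|^{1/2+\varepsilon}.$$
   Context: $\Gamma$ denotes Euler's gamma function. *)

theory Defs
  imports "HOL-Analysis.Analysis"
begin

end

theory Submission
  imports Defs "HOL-Complex_Analysis.Complex_Analysis" "HOL-Real_Asymp.Real_Asymp"
begin


lemma Polygamma1_eq: "Polygamma 1 (z::complex) = (\<Sum>k. inverse ((z + of_nat k)^2))"
  by (simp add: Polygamma_def power2_eq_square)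

lemma psi1_bound:
  fixes z :: complex
  assumes "Re z \<ge> 0" "norm z > 1/2"
  shows "norm (Polygamma 1 z) \<le> 2 / (norm z - 1/2)"
proof -
  define r where "r = norm z"
  have r: "r > 1/2" using assms r_def by simp
  define f where "f n = 2 / (r + real n - 1/2)" for n
  have "f \<longlonglongrightarrow> 0" unfolding f_def by real_asymp
  from telescope_sums'[OF this] have hs: "(\<lambda>n. f n - f (Suc n)) sums (2 / (r - 1/2))"
    by (simp add: f_def)
  have bnd: "norm (inverse ((z + of_nat k)^2)) \<le> f k - f (Suc k)" for k
  proof -
    have "(cmod (z + of_nat k))^2 = (Re z + k)^2 + (Im z)^2"
      by (simp add: cmod_power2)
    also have "\<dots> = r^2 + 2*k*Re z + k^2"
    proof -
      have "r^2 = (Re z)^2 + (Im z)^2" by (simp add: r_def cmod_power2)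
      then show ?thesis by (simp add: power2_eq_square algebra_simps)
    qed
    finally have eq0: "(cmod (z + of_nat k))^2 = r^2 + 2*k*Re z + k^2" .
    have e: "(cmod (z + of_nat k))^2 \<ge> ((r+k)^2 - 1/4)/2"
    proof -
      have "0 \<le> (r - k)^2" by simp
      then have "(r+k)^2 \<le> 2*(r^2+k^2)" by (simp add: power2_eq_square algebra_simps)
      moreover have "0 \<le> k * Re z" using assms(1) by simp
      ultimately show ?thesis using eq0 by (simp add: power2_eq_square)
    qed
    have "(1/2)^2 < (r+k)^2" using r by (intro power_strict_mono) auto
    then have pos: "(r+k)^2 - 1/4 > 0" by (simp add: power2_eq_square)
    have "norm (inverse ((z + of_nat k)^2)) = 1 / (cmod (z + of_nat k))^2"
      by (simp add: norm_inverse norm_power divide_inverse)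
    also have "\<dots> \<le> 1 / (((r+k)^2 - 1/4)/2)"
    proof (rule divide_left_mono)
      show "((r+k)^2 - 1/4)/2 \<le> (cmod (z + of_nat k))^2" by (rule e)
      have "((r+k)^2 - 1/4)/2 > 0" using pos by simp
      then have "(cmod (z + of_nat k))^2 > 0" using e by linarith
      then show "0 < (cmod (z + of_nat k))^2 * (((r+k)^2 - 1/4)/2)" using pos by simp
    qed simp
    also have "\<dots> = f k - f (Suc k)"
      unfolding f_def using r pos by (simp add: field_simps power2_eq_square)
    finally show ?thesis .
  qed
  have "norm (Polygamma 1 z) \<le> (\<Sum>n. f n - f (Suc n))"
    unfolding Polygamma1_eq by (rule norm_suminf_le[OF bnd]) (use hs in \<open>simp add: sums_iff\<close>)
  also have "\<dots> = 2 / (norm z - 1/2)" using hs r_def by (simp add: sums_iff)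
  finally show ?thesis .
qed


lemma Re_pos_notin: "Re (z::complex) > 0 \<Longrightarrow> z \<notin> \<real>\<^sub>\<le>\<^sub>0"
  by (auto simp: complex_nonpos_Reals_iff)

lemma Re_pos_notin_Ints: "Re (z::complex) > 0 \<Longrightarrow> z \<notin> \<int>\<^sub>\<le>\<^sub>0"
  using Re_pos_notin nonpos_Ints_subset_nonpos_Reals by blast

lemma half_line_identity:
  fixes y :: real
  defines "z \<equiv> 1/2 + \<i> * complex_of_real y"
  shows "2 * Re (ln_Gamma z) = ln pi - ln (cosh (pi * y))"
proof -
  have Rez: "Re z = 1/2" by (simp add: z_def)
  have zn: "z \<notin> \<int>\<^sub>\<le>\<^sub>0" by (rule Re_pos_notin_Ints) (simp add: Rez)
  have G: "Gamma z = exp (ln_Gamma z)" using zn by (simp add: Gamma_complex_altdef)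
  have c: "1 - z = cnj z" by (simp add: z_def complex_eq_iff)
  have "Gamma z * Gamma (1 - z) = Gamma z * cnj (Gamma z)" by (simp add: c cnj_Gamma)
  also have "\<dots> = of_real ((norm (Gamma z))^2)" by (rule complex_norm_square[symmetric])
  also have "norm (Gamma z) = exp (Re (ln_Gamma z))" by (simp add: G norm_exp_eq_Re)
  finally have e1: "Gamma z * Gamma (1 - z) = of_real (exp (2 * Re (ln_Gamma z)))"
    by (simp add: exp_double)
  have "sin (of_real pi * z) = sin (of_real (pi/2) + \<i> * of_real (pi * y))"
    by (simp add: z_def algebra_simps)
  also have "\<dots> = cos (\<i> * of_real (pi * y))" by (simp add: sin_add)
  also have "\<dots> = of_real (cosh (pi * y))"
    using cosh_real[of "pi * y"] by (simp add: cosh_def exp_minus del: of_real_mult)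
  finally have e2: "sin (of_real pi * z) = of_real (cosh (pi * y))" .
  have "of_real (exp (2 * Re (ln_Gamma z))) = (of_real (pi / cosh (pi * y)) :: complex)"
    using Gamma_reflection_complex[of z] e1 e2 by simp
  then have "exp (2 * Re (ln_Gamma z)) = pi / cosh (pi * y)" using of_real_eq_iff by blast
  then have "2 * Re (ln_Gamma z) = ln (pi / cosh (pi * y))" by (metis ln_exp)
  also have "\<dots> = ln pi - ln (cosh (pi * y))" by (simp add: ln_div)
  finally show ?thesis .
qed

lemma deriv1:
  fixes y :: real
  shows "((\<lambda>y. Re (ln_Gamma (1/2 + \<i> * complex_of_real y))) has_real_derivative
          Re (\<i> * Digamma (1/2 + \<i> * complex_of_real y))) (at y)"
proof -
  have Dg: "((\<lambda>y. 1/2 + \<i> * complex_of_real y) has_vector_derivative \<i>) (at y)"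
    by (auto intro!: derivative_eq_intros)
  have "(ln_Gamma has_field_derivative Digamma (1/2 + \<i> * complex_of_real y)) (at (1/2 + \<i> * complex_of_real y))"
    by (rule has_field_derivative_ln_Gamma_complex, rule Re_pos_notin) simp
  from field_vector_diff_chain_at[OF Dg this] have V:
    "((\<lambda>y. ln_Gamma (1/2 + \<i> * complex_of_real y)) has_vector_derivative \<i> * Digamma (1/2 + \<i> * complex_of_real y)) (at y)"
    by (simp add: o_def)
  show ?thesis using has_field_derivative_Re[OF V] by simp
qed

lemma deriv2:
  fixes y :: real
  shows "((\<lambda>y. Re (\<i> * Digamma (1/2 + \<i> * complex_of_real y))) has_real_derivative
          - Re (Polygamma 1 (1/2 + \<i> * complex_of_real y))) (at y)"
proof -
  have Dg: "((\<lambda>y. 1/2 + \<i> * complex_of_real y) has_vector_derivative \<i>) (at y)"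
    by (auto intro!: derivative_eq_intros)
  have "((\<lambda>z. \<i> * Digamma z) has_field_derivative \<i> * Polygamma 1 (1/2 + \<i> * complex_of_real y)) (at (1/2 + \<i> * complex_of_real y))"
    by (intro derivative_eq_intros has_field_derivative_Polygamma Re_pos_notin_Ints) auto
  from field_vector_diff_chain_at[OF Dg this] have
     "((\<lambda>y. \<i> * Digamma (1/2 + \<i> * complex_of_real y)) has_vector_derivative (- Polygamma 1 (1/2 + \<i> * complex_of_real y))) (at y)"
    by (simp add: o_def)
  then show ?thesis
    by (auto dest!: has_field_derivative_Re)
qed

lemma psi1_half_line:
  fixes y :: real
  shows "Re (Polygamma 1 (1/2 + \<i> * complex_of_real y)) \<ge> 0"
proof -
  define R1 where "R1 y = - (pi/2) * (sinh (pi*y) / cosh (pi*y))" for y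
  have F: "(\<lambda>y. Re (ln_Gamma (1/2 + \<i> * complex_of_real y))) = (\<lambda>y. (ln pi - ln (cosh (pi * y)))/2)"
    using half_line_identity by (auto simp: field_simps)
  have cpos: "cosh (pi*y) > 0" for y by simp
  have DR1: "((\<lambda>y. (ln pi - ln (cosh (pi * y)))/2) has_real_derivative R1 y) (at y)" for y
    unfolding R1_def using cpos[of y]
    by (auto intro!: derivative_eq_intros simp: field_simps)
  have eq1: "Re (\<i> * Digamma (1/2 + \<i> * complex_of_real y)) = R1 y" for y
    using deriv1[of y] DR1[of y] unfolding F by (rule DERIV_unique)
  have DR2: "(R1 has_real_derivative - (pi^2/2) / (cosh (pi*y))^2) (at y)" for y
  proof -
    have "(R1 has_real_derivative - (pi/2) * ((cosh (pi*y) * pi * cosh (pi*y) - sinh (pi*y) * (sinh (pi*y) * pi)) / (cosh (pi*y))^2)) (at y)"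
      unfolding R1_def[abs_def] using cpos[of y]
      by (auto intro!: derivative_eq_intros simp: power2_eq_square field_simps)
    moreover have "(cosh (pi*y) * pi * cosh (pi*y) - sinh (pi*y) * (sinh (pi*y) * pi)) = pi"
      using cosh_square_eq[of "pi*y"] by (simp add: power2_eq_square algebra_simps)
    ultimately show ?thesis by (simp add: power2_eq_square)
  qed
  have "(R1 has_real_derivative - Re (Polygamma 1 (1/2 + \<i> * complex_of_real y))) (at y)"
    using deriv2[of y] unfolding eq1[abs_def] .
  then have "- Re (Polygamma 1 (1/2 + \<i> * complex_of_real y)) = - (pi^2/2) / (cosh (pi*y))^2"
    using DR2 DERIV_unique by blast
  then show ?thesis by simp
qed


lemma psi1_nonneg:
  fixes \<xi> :: complex
  assumes "Re \<xi> > 1/2"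
  shows "Re (Polygamma 1 \<xi>) \<ge> 0"
proof (rule ccontr)
  assume "\<not> ?thesis"
  then have neg: "Re (Polygamma 1 \<xi>) < 0" by simp
  define e where "e = - Re (Polygamma 1 \<xi>) / 2"
  have e: "e > 0" using neg by (simp add: e_def)
  define R where "R = norm \<xi> + 1 + 2/e"
  have pe: "2/e > 0" using e by simp
  have R1: "R > norm \<xi>" "R > 1" unfolding R_def using pe norm_ge_zero[of \<xi>] by linarith+
  have Re_ge: "2 / (R - 1/2) \<le> e"
  proof -
    have "R - 1/2 \<ge> 2/e" using R_def by simp
    moreover have "2/e > 0" using e by simp
    ultimately have "2 / (R - 1/2) \<le> 2 / (2/e)" using R1(2) e by (intro divide_left_mono) auto
    also have "\<dots> = e" using e by simp
    finally show ?thesis .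
  qed
  define S where "S = {z. Re z > 1/2} \<inter> ball (0::complex) R"
  have openS: "open S" unfolding S_def by (intro open_Int open_halfspace_Re_gt open_ball)
  have noint: "z \<notin> \<int>\<^sub>\<le>\<^sub>0" if "Re z \<ge> 1/2" for z :: complex
    using that by (intro Re_pos_notin_Ints) simp
  have clS: "closure S \<subseteq> {z. Re z \<ge> 1/2} \<inter> cball 0 R"
    unfolding S_def by (intro closure_minimal closed_Int closed_halfspace_Re_ge closed_cball) auto
  have "Re (- Polygamma 1 \<xi>) \<le> e"
  proof (rule maximum_real_frontier[where S = S and f = "\<lambda>z. - Polygamma 1 z"])
    show "(\<lambda>z. - Polygamma 1 z) holomorphic_on interior S"
    proof -
      have "(\<lambda>z. - Polygamma 1 z) holomorphic_on S"
        unfolding S_def by (intro holomorphic_intros) (use noint in force)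
      then show ?thesis using interior_open[OF openS] by simp
    qed
    have "continuous_on ({z. Re z \<ge> 1/2} \<inter> cball 0 R) (\<lambda>z. - Polygamma 1 z)"
      by (intro continuous_intros continuous_on_Polygamma) (use noint in auto)
    then show "continuous_on (closure S) (\<lambda>z. - Polygamma 1 z)"
      using clS continuous_on_subset by blast
    show "bounded S" unfolding S_def by (intro bounded_Int) auto
    show "\<xi> \<in> S" using assms R1 by (auto simp: S_def)
  next
    fix z assume z: "z \<in> frontier S"
    then have zc: "Re z \<ge> 1/2" "norm z \<le> R" using clS by (auto simp: frontier_def)
    have "z \<notin> S" using z interior_open[OF openS] by (auto simp: frontier_def)
    then consider "Re z = 1/2" | "norm z = R" using zc by (force simp: S_def)
    then show "Re (- Polygamma 1 z) \<le> e"
    proof cases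
      case 1
      then have "z = 1/2 + \<i> * complex_of_real (Im z)" by (simp add: complex_eq_iff)
      then have "Re (Polygamma 1 z) \<ge> 0" using psi1_half_line[of "Im z"] by simp
      then show ?thesis using e by simp
    next
      case 2
      have "Re (- Polygamma 1 z) \<le> norm (Polygamma 1 z)"
        by (metis abs_le_D1 abs_Re_le_cmod norm_minus_cancel)
      also have "\<dots> \<le> 2 / (norm z - 1/2)" by (rule psi1_bound) (use zc 2 R1 in auto)
      also have "\<dots> \<le> e" using 2 Re_ge by simp
      finally show ?thesis .
    qed
  qed
  then show False using e_def e by simp
qed

lemma gamma_ratio:
  fixes w :: complex and a :: real
  assumes w: "Re w > 1/2" and a: "0 \<le> a" "a \<le> 1"
  shows "norm (Gamma (w + of_real a)) \<le> norm (Gamma w) * norm w powr a"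
proof -
  define H where "H t = Re (ln_Gamma (w + of_real t))" for t
  define H1 where "H1 t = Re (Digamma (w + of_real t))" for t
  define H2 where "H2 t = Re (Polygamma 1 (w + of_real t))" for t
  have Dg: "((\<lambda>t. w + complex_of_real t) has_vector_derivative 1) (at t)" for t
    by (auto intro!: derivative_eq_intros)
  have dH: "(H has_real_derivative H1 t) (at t)" if "t \<in> {0..1}" for t
  proof -
    have "(ln_Gamma has_field_derivative Digamma (w + of_real t)) (at (w + of_real t))"
      by (rule has_field_derivative_ln_Gamma_complex, rule Re_pos_notin) (use w that in auto)
    from field_vector_diff_chain_at[OF Dg this] have V:
      "((\<lambda>t. ln_Gamma (w + of_real t)) has_vector_derivative Digamma (w + of_real t)) (at t)"
      by (simp add: o_def)
    show ?thesis using has_field_derivative_Re[OF V] by (simp add: H_def[abs_def] H1_def)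
  qed
  have dH1: "(H1 has_real_derivative H2 t) (at t)" if "t \<in> {0..1}" for t
  proof -
    have "(Digamma has_field_derivative Polygamma (Suc 0) (w + of_real t)) (at (w + of_real t))"
      by (rule has_field_derivative_Polygamma, rule Re_pos_notin_Ints) (use w that in auto)
    from field_vector_diff_chain_at[OF Dg this] have V:
      "((\<lambda>t. Digamma (w + of_real t)) has_vector_derivative Polygamma (Suc 0) (w + of_real t)) (at t)"
      by (simp add: o_def)
    show ?thesis using has_field_derivative_Re[OF V] by (simp add: H1_def[abs_def] H2_def One_nat_def)
  qed
  have H2: "H2 t \<ge> 0" if "t \<in> {0..1}" for t
    unfolding H2_def by (rule psi1_nonneg) (use w that in auto)
  have cvx: "convex_on {0..1} H"
    by (rule f''_ge0_imp_convex[OF convex_real_interval(5) dH dH1 H2])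
  have "H ((1 - a) *\<^sub>R 0 + a *\<^sub>R 1) \<le> (1 - a) * H 0 + a * H 1"
    by (rule convex_onD[OF cvx]) (use a in auto)
  then have Ha: "H a \<le> (1 - a) * H 0 + a * H 1" by simp
  have nG: "norm (Gamma (w + of_real t)) = exp (H t)" if "t \<ge> 0" for t
  proof -
    have "w + of_real t \<notin> \<int>\<^sub>\<le>\<^sub>0" by (rule Re_pos_notin_Ints) (use w that in auto)
    then show ?thesis by (simp add: Gamma_complex_altdef H_def norm_exp_eq_Re)
  qed
  have w0: "w \<noteq> 0" using w by auto
  have "w \<notin> \<int>\<^sub>\<le>\<^sub>0" by (rule Re_pos_notin_Ints) (use w in auto)
  then have "Gamma (w + 1) = w * Gamma w" by (rule Gamma_plus1)
  then have "exp (H 1) = norm w * exp (H 0)" using nG[of 1] nG[of 0] by (simp add: norm_mult)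
  then have "H 1 = ln (norm w * exp (H 0))" by (metis ln_exp)
  also have "\<dots> = ln (norm w) + H 0" using w0 by (simp add: ln_mult)
  finally have "H 1 = ln (norm w) + H 0" .
  with Ha have "H a \<le> H 0 + a * ln (norm w)" by (simp add: algebra_simps)
  then have "exp (H a) \<le> exp (H 0) * exp (a * ln (norm w))"
    by (simp add: exp_add[symmetric])
  then show ?thesis using nG[of a] nG[of 0] a w0 by (simp add: powr_def)
qed


theorem lemma3p1:
  fixes \<theta> \<epsilon> t :: real and \<mu> :: complex
  assumes "\<theta> < 1/2"
    and "Re \<mu> \<ge> - \<theta>"
    and "\<epsilon> \<in> {-1/2..1/2}"
  shows "norm (Gamma ((\<mu> + 1 + of_real \<epsilon> + \<i> * of_real t) / 2)
               / Gamma ((\<mu> - of_real \<epsilon> + \<i> * of_real t) / 2))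
         \<le> norm ((\<mu> + 2 - of_real \<epsilon> + \<i> * of_real t) / 2) powr (1/2 + \<epsilon>)"
proof -
  define s where "s = (\<mu> - of_real \<epsilon> + \<i> * of_real t) / 2"
  define a where "a = 1/2 + \<epsilon>"
  have a01: "0 \<le> a" "a \<le> 1" using assms(3) by (auto simp: a_def)
  have e1: "(\<mu> + 1 + of_real \<epsilon> + \<i> * of_real t) / 2 = s + of_real a"
    by (simp add: s_def a_def field_simps)
  have e2: "(\<mu> + 2 - of_real \<epsilon> + \<i> * of_real t) / 2 = s + 1"
    by (simp add: s_def field_simps)
  have Res: "2 * Re s + a > 0" using assms by (simp add: s_def a_def field_simps)
  show ?thesis
  proof (cases "s \<in> \<int>\<^sub>\<le>\<^sub>0")
    case True
    then have "Gamma s = 0" by (rule Gamma_nonpos_Int)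
    then show ?thesis by (simp add: s_def[symmetric])
  next
    case False
    have s0: "s \<noteq> 0" using False by auto
    have G1: "Gamma (s + 1) = s * Gamma s" using False by (rule Gamma_plus1)
    have Gs: "Gamma s \<noteq> 0" using False by (simp add: Gamma_eq_zero_iff)
    have sa: "s + of_real a \<notin> \<int>\<^sub>\<le>\<^sub>0" by (rule Re_pos_notin_Ints) (use Res a01 in simp)
    have sa0: "s + of_real a \<noteq> 0" using Res a01 by (auto simp: complex_eq_iff)
    have G2: "Gamma (s + of_real a + 1) = (s + of_real a) * Gamma (s + of_real a)"
      using sa by (rule Gamma_plus1)
    have wR: "Re (s + 1) > 1/2" using Res a01 by simp
    have gr: "norm (Gamma (s + 1 + of_real a)) \<le> norm (Gamma (s + 1)) * norm (s + 1) powr a"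
      by (rule gamma_ratio[OF wR a01])
    have nsa: "norm s \<le> norm (s + of_real a)"
    proof -
      have n1: "(norm (s + of_real a))^2 = (Re s + a)^2 + (Im s)^2" by (simp add: cmod_power2)
      have n2: "(norm s)^2 = (Re s)^2 + (Im s)^2" by (simp add: cmod_power2)
      have n3: "(Re s + a)^2 - (Re s)^2 = a * (2*Re s + a)" by (simp add: power2_eq_square algebra_simps)
      have n4: "a * (2*Re s + a) \<ge> 0" using Res a01 by simp
      have "(norm s)^2 \<le> (norm (s + of_real a))^2" using n1 n2 n3 n4 by linarith
      then show ?thesis by (simp add: power2_le_iff_abs_le)
    qed
    have "norm (Gamma (s + of_real a)) * norm (s + of_real a)
          = norm (Gamma (s + 1 + of_real a))" using G2 by (simp add: norm_mult add_ac)
    also have "\<dots> \<le> norm s * norm (Gamma s) * norm (s + 1) powr a"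
      using gr G1 by (simp add: norm_mult)
    also have "\<dots> \<le> norm (s + of_real a) * norm (Gamma s) * norm (s + 1) powr a"
      using nsa by (intro mult_right_mono) auto
    finally have "norm (s + of_real a) * norm (Gamma (s + of_real a)) \<le> norm (s + of_real a) * (norm (Gamma s) * norm (s + 1) powr a)"
      by (simp only: mult_ac)
    then have "norm (Gamma (s + of_real a)) \<le> norm (Gamma s) * norm (s + 1) powr a"
      by (rule mult_left_le_imp_le) (use sa0 in simp)
    then have "norm (Gamma (s + of_real a)) / norm (Gamma s) \<le> norm (s + 1) powr a"
      using Gs by (simp add: divide_le_eq mult.commute)
    then show ?thesis unfolding e1 e2 s_def[symmetric] a_def[symmetric] by (simp add: norm_divide)
  qed
qed

end
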